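(* Let $t>0$ and $k\in\mathbb{N}$. For all $(y_1,\dots,y_{k+1})\in\mathbb{R}^{k+1}$, $$-\sum_{j=1}^k\mathbf{H}_t(y_{j+1}-y_j)\leq-\sum_{j=1}^k\mathbf{H}_t^{j,k+1}(y_{k+1}-y_j).$$
   Context: $\mathbf{H}_t(x)=e^{t^{1/3}x}$, and for integers $1\leq j<n$, $\mathbf{H}_t^{j,n}(x)=(n-1)^{-1}e^{t^{1/3}x/(n-j)}$. *)

theory Defs
  imports Complex_Main
begin

definition H :: "real \<Rightarrow> real \<Rightarrow> real" where
  "H t x = exp (t powr (1/3) * x)"

definition Hjn :: "real \<Rightarrow> nat \<Rightarrow> nat \<Rightarrow> real \<Rightarrow> real" where
  "Hjn t j n x = exp (t powr (1/3) * x / real (n - j)) / real (n - 1)"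

end

theory Submission
  imports Defs
begin

lemma exists_ge_avg:
  fixes a :: "nat \<Rightarrow> real"
  assumes "j \<le> k"
  shows "\<exists>m\<in>{j..k}. (\<Sum>i=j..k. a i) / real (Suc k - j) \<le> a m"
proof (rule ccontr)
  assume "\<not> ?thesis"
  hence lt: "\<And>m. m \<in> {j..k} \<Longrightarrow> a m < (\<Sum>i=j..k. a i) / real (Suc k - j)" by force
  have ne: "{j..k} \<noteq> {}" using assms by auto
  have "(\<Sum>i=j..k. a i) < (\<Sum>i=j..k. (\<Sum>i=j..k. a i) / real (Suc k - j))"
    by (rule sum_strict_mono) (use lt ne in auto)
  also have "\<dots> = (\<Sum>i=j..k. a i)" using assms by simp
  finally show False by simp
qed

theorem mainTheorem11:
  fixes t :: real and k :: nat and y :: "nat \<Rightarrow> real"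
  assumes "t > 0"
  shows "- (\<Sum>j=1..k. H t (y (j+1) - y j)) \<le> - (\<Sum>j=1..k. Hjn t j (k+1) (y (k+1) - y j))"
proof -
  define c where "c = t powr (1/3)"
  define a where "a i = c * (y (Suc i) - y i)" for i
  define S where "S = (\<Sum>j=1..k. H t (y (j+1) - y j))"
  have key: "Hjn t j (k+1) (y (k+1) - y j) \<le> S / real k" if j: "j \<in> {1..k}" for j
  proof -
    have tel: "c * (y (k+1) - y j) = (\<Sum>i=j..k. a i)"
      using j by (simp add: a_def sum_distrib_left[symmetric] sum_Suc_diff)
    obtain m where m: "m \<in> {j..k}" and am: "(\<Sum>i=j..k. a i) / real (Suc k - j) \<le> a m"
      using exists_ge_avg[of j k a] j by auto
    have "exp (c * (y (k+1) - y j) / real (k + 1 - j)) \<le> exp (a m)"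
      using am tel by simp
    also have "\<dots> = H t (y (m+1) - y m)" by (simp add: a_def H_def c_def)
    also have "\<dots> \<le> S" unfolding S_def
      by (rule member_le_sum) (use m j in \<open>auto simp: H_def\<close>)
    finally have "exp (c * (y (k+1) - y j) / real (k + 1 - j)) \<le> S" .
    thus ?thesis using j by (simp add: Hjn_def c_def divide_right_mono)
  qed
  show ?thesis
  proof (cases "k = 0")
    case True thus ?thesis by simp
  next
    case False
    have "(\<Sum>j=1..k. Hjn t j (k+1) (y (k+1) - y j)) \<le> (\<Sum>j=1..k. S / real k)"
      by (rule sum_mono) (rule key)
    also have "\<dots> = S" using False by simp
    finally show ?thesis unfolding S_def by simp
  qed
qed

end
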